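(* Let $\vartheta>0$ and $\gamma\in\mathbb R$ be fixed, let $\rho=1-\gamma/\sqrt s$, and let $F_s(\rho)=\sum_{n=0}^\infty p_s(0)\cdots p_s(n)\rho^{n+1}$ with $p_s(k)=\bigl(1+(k+1)\tfrac\vartheta s\bigr)^{-1}$, $k\in\mathbb N_0$. Then as $s\to\infty$, $F_s(\rho)\sim\Bigl(\frac2\vartheta\Bigr)^{1/2}\chi(\gamma/\sqrt{2\vartheta})\sqrt s+\frac{\gamma^3\sqrt2}{3\vartheta^{3/2}}\chi(\gamma/\sqrt{2\vartheta})-\frac{\gamma^2}{3\vartheta}-\frac23$, in the sense that the difference between the two sides tends to $0$.
   Context: $\chi$ denotes Mills' ratio, $\chi(\delta)=e^{\delta^2}\int_\delta^\infty e^{-y^2}dy$ for $\delta\in\mathbb R$. *)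

theory Defs
  imports "HOL-Analysis.Analysis"
begin

definition mills_ratio :: "real \<Rightarrow> real" where
  "mills_ratio \<delta> = exp (\<delta>\<^sup>2) * integral {\<delta>..} (\<lambda>y. exp (- (y\<^sup>2)))"

definition p_s :: "real \<Rightarrow> real \<Rightarrow> nat \<Rightarrow> real" where
  "p_s \<theta> s k = inverse (1 + (real k + 1) * \<theta> / s)"

definition F_s :: "real \<Rightarrow> real \<Rightarrow> real \<Rightarrow> real" where
  "F_s \<theta> s \<rho> = (\<Sum>n. (\<Prod>k\<le>n. p_s \<theta> s k) * \<rho> ^ (n + 1))"

end

theory Submission
  imports Defs
begin

lemma powr_deriv_aux:
  fixes z t :: real
  assumes "z > 0" "t > 0"
  shows "((\<lambda>t. t powr z / z) has_vector_derivative t powr (z - 1)) (at t)"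
proof -
  have "((\<lambda>t. t powr z / z) has_real_derivative z * t powr (z - 1) / z) (at t)"
    by (intro DERIV_cdivide has_real_derivative_powr assms)
  then show ?thesis using assms by (simp add: has_real_derivative_iff_has_vector_derivative)
qed

lemma beta_int_real:
  fixes z :: real
  assumes "z > 0"
  shows "((\<lambda>t. t powr (z - 1) * (1 - t) ^ n) has_integral (fact n / pochhammer z (n+1))) {0..1}"
  using assms
proof (induction n arbitrary: z)
  case 0
  have "((\<lambda>t. t powr (z - 1)) has_integral (1 powr z / z - 0 powr z / z)) {0..1::real}" using 0
    by (intro fundamental_theorem_of_calculus_interior)
       (auto intro!: continuous_intros continuous_on_powr' powr_deriv_aux)
  thus ?case by simp
next
  case (Suc n)
  let ?f = "\<lambda>t::real. t powr z / z"
  let ?f' = "\<lambda>t::real. t powr (z - 1)"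
  let ?g = "\<lambda>t::real. (1 - t) ^ Suc n"
  let ?g' = "\<lambda>t::real. - ((1 - t) ^ n) * of_nat (Suc n)"
  have "((\<lambda>t. ?f' t * ?g t) has_integral
          (of_nat (Suc n)) * fact n / pochhammer z (n+2)) {0..1}"
    (is "(_ has_integral ?I) _")
  proof (rule integration_by_parts_interior[where f' = ?f' and g = ?g])
    from Suc.prems show "continuous_on {0..1} ?f" "continuous_on {0..1} ?g"
      by (auto intro!: continuous_intros continuous_on_powr')
  next
    fix t :: real assume t: "t \<in> {0<..<1}"
    show "(?f has_vector_derivative ?f' t) (at t)" using t Suc.prems
      by (auto intro!: powr_deriv_aux)
    show "(?g has_vector_derivative ?g' t) (at t)"
      unfolding has_real_derivative_iff_has_vector_derivative[symmetric]
      by (rule derivative_eq_intros refl)+ (cases n, simp_all add: algebra_simps)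
  next
    from Suc.prems have [simp]: "z \<noteq> 0" by auto
    from Suc.prems have A: "z + of_nat n > 0" for n by simp
    have [simp]: "z + of_nat n \<noteq> 0" "z + 1 + of_nat n \<noteq> 0" for n
      using A[of n] A[of "Suc n"] by (auto simp add: add.assoc)
    have "((\<lambda>x. x powr z * ((1 - x) ^ n) * (- of_nat (Suc n) / z)) has_integral
            fact n / pochhammer (z+1) (n+1) * (- of_nat (Suc n) / z)) {0..1}"
      (is "(?A has_integral ?B) _")
      using Suc.IH[of "z+1"] Suc.prems by (intro has_integral_mult_left) (simp_all add: add_ac pochhammer_rec)
    also have "?A = (\<lambda>t. ?f t * ?g' t)" by (intro ext) (simp_all add: field_simps)
    also have "?B = - (of_nat (Suc n) * fact n / pochhammer z (n+2))"
      by (simp add: field_split_simps pochhammer_rec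
            prod.shift_bounds_cl_Suc_ivl del: of_nat_Suc)
    finally show "((\<lambda>t. ?f t * ?g' t) has_integral (?f 1 * ?g 1 - ?f 0 * ?g 0 - ?I)) {0..1}"
      by simp
  qed (simp_all add: bounded_bilinear_mult)
  thus ?case by simp
qed

lemma ln_ineq1:
  fixes z :: real assumes "0 \<le> z" "z < 1"
  shows "ln (1 - z) \<le> - z - z^2/2"
proof -
  let ?f = "\<lambda>z::real. ln (1 - z) + z + z^2/2"
  have "?f 0 \<ge> ?f z"
  proof (rule DERIV_nonpos_imp_nonincreasing[OF assms(1)])
    fix x assume x: "0 \<le> x" "x \<le> z"
    with assms have "x < 1" by linarith
    show "\<exists>y. (?f has_real_derivative y) (at x) \<and> y \<le> 0"
      apply (rule exI[of _ "-(x^2)/(1-x)"])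
      using \<open>x < 1\<close> x
      by (auto intro!: derivative_eq_intros simp: field_simps power2_eq_square)
  qed
  then show ?thesis by simp
qed

lemma ln_ineq4:
  fixes z :: real assumes "0 \<le> z" "z \<le> 1/2"
  shows "\<bar>ln (1 - z) + z + z^2/2 + z^3/3\<bar> \<le> z^4"
proof -
  let ?f = "\<lambda>z::real. ln (1 - z) + z + z^2/2 + z^3/3"
  let ?g = "\<lambda>z::real. ln (1 - z) + z + z^2/2 + z^3/3 + z^4"
  have "?f 0 \<ge> ?f z"
  proof (rule DERIV_nonpos_imp_nonincreasing[OF assms(1)])
    fix x assume x: "0 \<le> x" "x \<le> z"
    with assms have "x < 1" by linarith
    show "\<exists>y. (?f has_real_derivative y) (at x) \<and> y \<le> 0"
      apply (rule exI[of _ "-(x^3)/(1-x)"])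
      using \<open>x < 1\<close> x
      by (auto intro!: derivative_eq_intros simp: field_simps power2_eq_square power3_eq_cube)
  qed
  moreover have "?g 0 \<le> ?g z"
  proof (rule DERIV_nonneg_imp_nondecreasing[OF assms(1)])
    fix x assume x: "0 \<le> x" "x \<le> z"
    with assms have x1: "x \<le> 1/2" by linarith
    show "\<exists>y. (?g has_real_derivative y) (at x) \<and> y \<ge> 0"
    proof (rule exI[of _ "x^3 * (4 - 1/(1-x))"], intro conjI)
      show "(?g has_real_derivative x^3 * (4 - 1/(1-x))) (at x)"
        using x1 x
        by (auto intro!: derivative_eq_intros simp: field_simps power2_eq_square power3_eq_cube
            eval_nat_numeral)
      have "1/(1-x) \<le> 2" using x1 x by (simp add: field_simps)
      then show "x^3 * (4 - 1/(1-x)) \<ge> 0" using x by simp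
    qed
  qed
  ultimately show ?thesis by simp
qed

lemma ln_ineq2:
  fixes z :: real assumes "0 \<le> z" "z \<le> 1/2"
  shows "\<bar>ln (1 - z) + z\<bar> \<le> 2 * z^2"
  using ln_one_minus_pos_upper_bound[of z] ln_one_minus_pos_lower_bound[of z] assms by auto

lemma ln_ineq3:
  fixes z :: real assumes "0 \<le> z" "z \<le> 1/2"
  shows "\<bar>ln (1 - z) + z + z^2/2\<bar> \<le> z^3"
proof -
  have e: "z^4 = z^3 * z" by (simp add: eval_nat_numeral)
  have "z^4 \<le> z^3 * (1/2)" unfolding e using assms by (intro mult_left_mono) auto
  moreover have "z^3 \<ge> 0" using assms by simp
  ultimately show ?thesis using ln_ineq4[OF assms] by auto
qed

lemma exp_diff_bound:
  fixes A B :: real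
  shows "\<bar>exp A - exp B\<bar> \<le> \<bar>A - B\<bar> * exp (max A B)"
proof -
  have *: "exp Y - exp X \<le> (Y - X) * exp Y" if "X \<le> Y" for X Y :: real
  proof -
    have "1 - (Y - X) \<le> exp (X - Y)" using exp_ge_add_one_self[of "X-Y"] by linarith
    then have "exp Y * (1 - (Y - X)) \<le> exp Y * exp (X - Y)" by (simp add: mult_left_mono)
    also have "\<dots> = exp X" by (simp add: exp_add[symmetric])
    finally show ?thesis by (simp add: algebra_simps)
  qed
  show ?thesis
  proof (cases "A \<le> B")
    case True
    then show ?thesis using *[OF True] by (simp add: max_def abs_if)
  next
    case False
    then show ?thesis using *[of B A] by (simp add: max_def abs_if)
  qed
qed

lemma exp_taylor2_bound:
  fixes w :: real assumes "\<bar>w\<bar> \<le> 1"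
  shows "\<bar>exp w - 1 - w\<bar> \<le> w^2"
proof (cases "w \<ge> 0")
  case True
  have "exp w \<le> 1 + w + w^2" using exp_bound[of w] True assms by auto
  moreover have "1 + w \<le> exp w" by (rule exp_ge_add_one_self)
  ultimately show ?thesis unfolding abs_le_iff using zero_le_power2[of w] by linarith
next
  case False
  define t where "t = - w"
  have t: "t > 0" using False t_def by simp
  have "exp w = 1 / exp t" by (simp add: t_def exp_minus field_simps)
  also have "\<dots> \<le> 1 / (1 + t)" using exp_ge_add_one_self[of t] t
    by (intro divide_left_mono) auto
  also have "\<dots> \<le> 1 - t + t^2"
  proof -
    have "1 \<le> (1 + t) * (1 - t + t^2)" using t by (simp add: algebra_simps power2_eq_square)
    then show ?thesis using t by (simp add: field_simps)
  qed
  finally have "exp w \<le> 1 + w + w^2" by (simp add: t_def)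
  moreover have "1 + w \<le> exp w" by (rule exp_ge_add_one_self)
  ultimately show ?thesis unfolding abs_le_iff using zero_le_power2[of w] by linarith
qed

lemma cont_bound_integrable:
  fixes f g :: "real \<Rightarrow> real"
  assumes "continuous_on {a..} f" "\<And>x. x \<ge> a \<Longrightarrow> \<bar>f x\<bar> \<le> g x" "g integrable_on {a..}"
  shows "f integrable_on {a..}"
proof (rule integrable_on_all_intervals_integrable_bound[where g = g])
  fix u v :: real
  have int: "f integrable_on {max a u..v}"
    by (rule integrable_continuous_interval, rule continuous_on_subset[OF assms(1)]) auto
  have eq: "{a..} \<inter> cbox u v = {max a u..v}" by auto
  show "(\<lambda>x. if x \<in> {a..} then f x else 0) integrable_on cbox u v"
    unfolding integrable_restrict_Int eq by (rule int)
qed (use assms in auto)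

lemma integral_Ici_tendsto:
  fixes f g :: "real \<Rightarrow> real"
  assumes f: "f integrable_on {a..}" and b: "\<And>x. x \<ge> a \<Longrightarrow> \<bar>f x\<bar> \<le> g x" and g: "g integrable_on {a..}"
  shows "((\<lambda>T. integral {a..T} f) \<longlongrightarrow> integral {a..} f) at_top"
proof (rule tendsto_at_topI_sequentially)
  fix X :: "nat \<Rightarrow> real" assume X: "filterlim X at_top sequentially"
  define fn where "fn = (\<lambda>n x. if x \<in> {..X n} then f x else 0)"
  have int: "fn n integrable_on {a..}" for n
  proof -
    have e: "{..X n} \<inter> {a..} = {a..X n}" by auto
    show ?thesis unfolding fn_def integrable_restrict_Int e
      by (rule integrable_on_subinterval[OF f]) auto
  qed
  have eq: "integral {a..} (fn n) = integral {a..X n} f" for n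
    unfolding fn_def integral_restrict_Int by (simp add: Int_commute atLeastAtMost_def)
  have "(\<lambda>n. integral {a..} (fn n)) \<longlonglongrightarrow> integral {a..} f"
  proof (rule dominated_convergence(2)[OF int g])
    fix n x assume "x \<in> {a..}"
    then show "norm (fn n x) \<le> g x" using b[of x] abs_ge_zero[of "f x"] by (auto simp: fn_def)
  next
    fix x :: real assume "x \<in> {a..}"
    have "eventually (\<lambda>n. X n \<ge> x) sequentially"
      using X by (simp add: filterlim_at_top)
    then have "eventually (\<lambda>n. fn n x = f x) sequentially"
      by eventually_elim (auto simp: fn_def)
    then show "(\<lambda>n. fn n x) \<longlonglongrightarrow> f x" by (rule tendsto_eventually)
  qed
  then show "(\<lambda>n. integral {a..X n} f) \<longlonglongrightarrow> integral {a..} f" by (simp add: eq)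
qed

lemma improper_FTC:
  fixes f F g :: "real \<Rightarrow> real"
  assumes cont: "continuous_on {a..} f"
    and deriv: "\<And>x. x \<ge> a \<Longrightarrow> (F has_real_derivative f x) (at x)"
    and b: "\<And>x. x \<ge> a \<Longrightarrow> \<bar>f x\<bar> \<le> g x" and g: "g integrable_on {a..}"
    and lim: "(F \<longlongrightarrow> L) at_top"
  shows "(f has_integral (L - F a)) {a..}"
proof -
  have fi: "f integrable_on {a..}" by (rule cont_bound_integrable[OF cont b g])
  have t1: "((\<lambda>T. integral {a..T} f) \<longlongrightarrow> integral {a..} f) at_top"
    by (rule integral_Ici_tendsto[OF fi b g])
  have "eventually (\<lambda>T. integral {a..T} f = F T - F a) at_top"
    using eventually_ge_at_top[of a]
  proof eventually_elim
    case (elim T)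
    have "(f has_integral (F T - F a)) {a..T}"
      using elim
      by (intro fundamental_theorem_of_calculus)
         (auto intro!: has_field_derivative_at_within deriv
               simp flip: has_real_derivative_iff_has_vector_derivative)
    then show ?case by (simp add: integral_unique)
  qed
  note ev = this
  have tl: "((\<lambda>T. F T - F a) \<longlongrightarrow> L - F a) at_top"
    by (intro tendsto_intros lim)
  have t2: "((\<lambda>T. integral {a..T} f) \<longlongrightarrow> L - F a) at_top"
    by (rule Lim_transform_eventually[OF tl]) (use ev in \<open>auto elim: eventually_mono\<close>)
  have "integral {a..} f = L - F a" by (rule tendsto_unique[OF _ t1 t2]) simp
  with fi show ?thesis by (metis has_integral_integral)
qed

lemma exp_series_real: "(\<lambda>n. y^n / fact n) sums exp (y::real)"
  using exp_converges[of y] by (simp add: divide_inverse_commute scaleR_conv_of_real mult.commute)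

lemma G_sums:
  fixes a x :: real
  assumes a: "a > 0" and x: "x \<ge> 0"
  shows "((\<lambda>u. u powr (a-1) * exp (x*(1-u))) has_integral
            integral {0..1} (\<lambda>u. u powr (a-1) * exp (x*(1-u)))) {0..1}
         \<and> (\<lambda>m. x^m / pochhammer a (m+1)) sums integral {0..1} (\<lambda>u. u powr (a-1) * exp (x*(1-u)))"
proof -
  define g where "g = (\<lambda>u. u powr (a-1) * exp (x*(1-u)))"
  define f where "f = (\<lambda>k u. \<Sum>m<k. u powr (a-1) * (1-u)^m * (x^m/fact m))"
  have fi: "(f k has_integral (\<Sum>m<k. x^m / pochhammer a (m+1))) {0..1}" for k
    unfolding f_def
  proof (rule has_integral_sum)
    fix m assume "m \<in> {..<k}"
    have "((\<lambda>t. t powr (a - 1) * (1 - t) ^ m * (x^m/fact m)) has_integral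
           (fact m / pochhammer a (m+1)) * (x^m/fact m)) {0..1}"
      by (rule has_integral_mult_left[OF beta_int_real[OF a]])
    moreover have "(fact m / pochhammer a (m+1)) * (x^m/fact m) = x^m / pochhammer a (m+1)"
      by simp
    ultimately show "((\<lambda>t. t powr (a - 1) * (1 - t) ^ m * (x^m/fact m)) has_integral
           x^m / pochhammer a (m+1)) {0..1}" by simp
  qed simp
  have fsum: "f k u = u powr (a-1) * (\<Sum>m<k. (x*(1-u))^m/fact m)" for k u
    unfolding f_def by (simp add: sum_distrib_left power_mult_distrib mult_ac)
  have psum_le: "(\<Sum>m<k. y^m/fact m) \<le> exp y" if "y \<ge> 0" for k and y :: real
    using sum_le_suminf[OF sums_summable[OF exp_series_real[of y]], of "{..<k}"] that
      sums_unique[OF exp_series_real[of y]] by simp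
  have g0: "((\<lambda>u. u powr (a-1) * exp x) has_integral (exp x / a)) {0..1}"
    using has_integral_mult_left[OF beta_int_real[OF a, of 0], of "exp x"] a by simp
  have mc: "g integrable_on {0..1} \<and> (\<lambda>k. integral {0..1} (f k)) \<longlonglongrightarrow> integral {0..1} g"
  proof (rule monotone_convergence_increasing)
    show "f k integrable_on {0..1}" for k using fi by blast
  next
    fix k and u :: real assume u: "u \<in> {0..1}"
    show "f k u \<le> f (Suc k) u" using u x unfolding f_def by simp
  next
    fix u :: real assume u: "u \<in> {0..1}"
    have "(\<lambda>k. \<Sum>m<k. (x*(1-u))^m/fact m) \<longlonglongrightarrow> exp (x*(1-u))"
      using exp_series_real[of "x*(1-u)"] by (simp add: sums_def)
    then show "(\<lambda>k. f k u) \<longlonglongrightarrow> g u" unfolding fsum g_def by (intro tendsto_intros)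
  next
    have "norm (integral {0..1} (f k)) \<le> exp x / a" for k
    proof -
      have "integral {0..1} (f k) \<le> integral {0..1} (\<lambda>u. u powr (a-1) * exp x)"
      proof (rule integral_le)
        show "f k integrable_on {0..1}" using fi by blast
        show "(\<lambda>u. u powr (a-1) * exp x) integrable_on {0..1}" using g0 by blast
        fix u :: real assume u: "u \<in> {0..1}"
        have "(\<Sum>m<k. (x*(1-u))^m/fact m) \<le> exp (x*(1-u))" using u x by (intro psum_le) auto
        also have "\<dots> \<le> exp x" using u x by (simp add: mult_left_le)
        finally show "f k u \<le> u powr (a-1) * exp x" unfolding fsum
          by (intro mult_left_mono) auto
      qed
      also have "\<dots> = exp x / a" using g0 by (rule integral_unique)
      finally have "integral {0..1} (f k) \<le> exp x / a" .
      moreover have "integral {0..1} (f k) \<ge> 0"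
      proof -
        have "(\<Sum>m<k. x ^ m / pochhammer a (m+1)) \<ge> 0"
          using a x by (intro sum_nonneg divide_nonneg_pos pochhammer_pos) auto
        then show ?thesis using fi[of k] by (simp add: integral_unique)
      qed
      ultimately show ?thesis by simp
    qed
    then show "bounded (range (\<lambda>k. integral {0..1} (f k)))"
      by (intro boundedI[of _ "exp x / a"]) auto
  qed
  have "(\<lambda>m. x^m / pochhammer a (m+1)) sums integral {0..1} g"
  proof -
    have "integral {0..1} (f k) = (\<Sum>m<k. x^m / pochhammer a (m+1))" for k
      using fi[of k] by (rule integral_unique)
    then show ?thesis unfolding sums_def using mc by simp
  qed
  then show ?thesis using mc unfolding g_def by (auto intro: integrable_integral)
qed

lemma prod_p_s:
  fixes \<theta> s \<rho> :: real
  assumes "\<theta> > 0" "s > 0"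
  defines "a \<equiv> s / \<theta>"
  shows "(\<Prod>k\<le>n. p_s \<theta> s k) * \<rho>^(n+1) = a * (a*\<rho>)^(Suc n) / pochhammer a (Suc n + 1)"
proof (induction n)
  case 0
  have a: "a > 0" using assms by (simp add: a_def)
  have ps0: "p_s \<theta> s 0 = a / (a + 1)"
    using assms by (simp add: p_s_def a_def field_simps)
  have "a + a * a > 0" using a by (simp add: add_pos_pos)
  then show ?case using a by (simp add: ps0 pochhammer_Suc field_simps)
next
  case (Suc n)
  have a: "a > 0" using assms by (simp add: a_def)
  have ps: "p_s \<theta> s (Suc n) = a / (a + real (Suc n) + 1)"
    using assms by (simp add: p_s_def a_def field_simps)
  have "(\<Prod>k\<le>Suc n. p_s \<theta> s k) * \<rho>^(Suc n+1) = ((\<Prod>k\<le>n. p_s \<theta> s k) * \<rho>^(n+1)) * (p_s \<theta> s (Suc n) * \<rho>)"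
    by (simp add: mult_ac)
  also have "\<dots> = a * (a*\<rho>)^(Suc n) / pochhammer a (Suc n + 1) * (a / (a + real (Suc n) + 1) * \<rho>)"
    by (simp only: Suc.IH ps)
  also have "\<dots> = a * (a*\<rho>)^(Suc (Suc n)) / pochhammer a (Suc (Suc n) + 1)"
    using a by (simp add: pochhammer_Suc field_simps pochhammer_pos[of a] less_imp_neq[symmetric])
  finally show ?case .
qed

lemma F_s_repr:
  fixes \<theta> s \<rho> :: real
  assumes "\<theta> > 0" "s > 0" "\<rho> \<ge> 0"
  defines "a \<equiv> s / \<theta>"
  shows "F_s \<theta> s \<rho> = a * integral {0..1} (\<lambda>u. u powr (a-1) * exp ((a*\<rho>)*(1-u))) - 1"
proof -
  have a: "a > 0" using assms by (simp add: a_def)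
  define I where "I = integral {0..1} (\<lambda>u. u powr (a-1) * exp ((a*\<rho>)*(1-u)))"
  have "(\<lambda>m. (a*\<rho>)^m / pochhammer a (m+1)) sums I"
    using G_sums[OF a, of "a*\<rho>"] a assms(3) unfolding I_def by auto
  then have "(\<lambda>n. (a*\<rho>)^(Suc n) / pochhammer a (Suc n+1)) sums (I - 1/a)"
    using sums_Suc_iff[of "\<lambda>m. (a*\<rho>)^m / pochhammer a (m+1)" "I - 1/a"] by simp
  then have "(\<lambda>n. a * ((a*\<rho>)^(Suc n) / pochhammer a (Suc n+1))) sums (a * (I - 1/a))"
    by (rule sums_mult)
  moreover have "a * (I - 1/a) = a * I - 1" using a by (simp add: field_simps)
  moreover have "(\<Prod>k\<le>n. p_s \<theta> s k) * \<rho>^(n+1) = a * ((a*\<rho>)^(Suc n) / pochhammer a (Suc n+1))" for n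
    using prod_p_s[OF assms(1,2), of n \<rho>] unfolding a_def by simp
  ultimately have "(\<lambda>n. (\<Prod>k\<le>n. p_s \<theta> s k) * \<rho>^(n+1)) sums (a * I - 1)"
    by simp
  then show ?thesis unfolding F_s_def I_def by (simp add: sums_unique[symmetric])
qed

definition eh :: "real \<Rightarrow> real \<Rightarrow> real \<Rightarrow> real" where
  "eh h c y = (1 - h*y) powr (1/h^2 - 1) * exp ((1 - c*h) * y / h)"

lemma subst_eh:
  fixes h c :: real
  assumes h: "h > 0" and rho: "1 - c*h \<ge> 0"
  shows "((\<lambda>y. eh h c y) has_integral
     (integral {0..1} (\<lambda>u. u powr (1/h^2-1) * exp ((1/h^2*(1-c*h))*(1-u))) / h)) {0..1/h}"
proof -
  let ?f = "\<lambda>u. u powr (1/h^2-1) * exp ((1/h^2*(1-c*h))*(1-u))"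
  have a: "1/h^2 > 0" using h by simp
  have "(?f has_integral integral {0..1} ?f) {0..1}"
    using G_sums[OF a, of "1/h^2*(1-c*h)"] rho h by auto
  from has_integral_affinity[of ?f _ 0 1 "-h" 1, OF _] this h
  have "((\<lambda>y. ?f (-h * y + 1)) has_integral (1/h) * integral {0..1} ?f)
          ((\<lambda>x. (1 / -h) * x + - ((1 / -h) * 1)) ` {0..1})"
    by simp
  moreover have "((\<lambda>x. (1 / -h) * x + - ((1 / -h) * 1)) ` {0..1}) = {0..1/h}"
  proof -
    have "(\<lambda>x. (1 - x) / h) ` {0..1} = {0..1/h}"
    proof (intro equalityI subsetI)
      fix y assume "y \<in> (\<lambda>x. (1 - x) / h) ` {0..1}"
      then show "y \<in> {0..1/h}" using h by (auto simp: divide_right_mono)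
    next
      fix y assume y: "y \<in> {0..1/h}"
      then have "1 - h*y \<in> {0..1}" "y = (1 - (1 - h*y))/h" using h by (auto simp: field_simps)
      then show "y \<in> (\<lambda>x. (1 - x) / h) ` {0..1}" by blast
    qed
    moreover have "(\<lambda>x. (1 / -h) * x + - ((1 / -h) * 1)) = (\<lambda>x::real. (1 - x) / h)"
      by (rule ext) (simp add: diff_divide_distrib)
    ultimately show ?thesis by (simp only:)
  qed
  moreover have "(\<lambda>y. ?f (-h * y + 1)) = eh h c"
    using h by (auto simp: eh_def field_simps power2_eq_square intro!: ext)
  ultimately show ?thesis by simp
qed

lemma exp_ge_cubic: "(y::real) \<ge> 0 \<Longrightarrow> 1 + y + y^2/2 + y^3/6 \<le> exp y"
proof -
  assume y: "y \<ge> 0"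
  have s: "(\<lambda>n. y^n / fact n) sums exp y"
    using exp_converges[of y] by (simp add: divide_inverse_commute scaleR_conv_of_real mult.commute)
  have "(\<Sum>n<4. y^n / fact n) \<le> exp y"
    using sum_le_suminf[OF sums_summable[OF s], of "{..<4}"] y sums_unique[OF s] by simp
  then show ?thesis by (simp add: eval_nat_numeral fact_numeral)
qed

definition mf :: "real \<Rightarrow> real \<Rightarrow> real" where
  "mf c y = (y^3 + 4*y + 1) * exp (-3*y^2/8 + (1/2 + \<bar>c\<bar>)*y)"

lemma mf_le_exp:
  fixes c :: real
  shows "\<exists>K. \<forall>y\<ge>0. mf c y \<le> K * exp (-y)"
proof -
  define B where "B = 1/2 + \<bar>c\<bar>"
  define K where "K = 11 * exp (2*(B+2)^2/3)"
  have "mf c y \<le> K * exp (-y)" if y: "y \<ge> 0" for y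
  proof -
    have p: "y^3 + 4*y + 1 \<le> 11 * exp y"
    proof -
      have "y^2 \<ge> 0" "y^3 \<ge> 0" using y by auto
      then show ?thesis using exp_ge_cubic[OF y] y by linarith
    qed
    have e: "-3*y^2/8 + B*y + 2*y \<le> 2*(B+2)^2/3"
    proof -
      have "0 \<le> (3/8) * (y - 4*(B+2)/3)^2" by simp
      moreover have "(3/8) * (y - 4*(B+2)/3)^2 = 3*y^2/8 - B*y - 2*y + 2*(B+2)^2/3"
        by (simp add: power2_eq_square algebra_simps)
      ultimately show ?thesis by linarith
    qed
    have "mf c y = (y^3 + 4*y + 1) * exp (-3*y^2/8 + B*y)" by (simp add: mf_def B_def)
    also have "\<dots> \<le> 11 * exp y * exp (-3*y^2/8 + B*y)"
      by (rule mult_right_mono[OF p]) simp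
    also have "\<dots> = 11 * exp (-3*y^2/8 + B*y + 2*y) * exp (-y)"
      by (simp add: exp_add[symmetric])
    also have "\<dots> \<le> 11 * exp (2*(B+2)^2/3) * exp (-y)"
      using e by simp
    finally show ?thesis by (simp add: K_def)
  qed
  then show ?thesis by (intro exI[of _ K]) auto
qed

lemma mf_pos: "y \<ge> 0 \<Longrightarrow> mf c y \<ge> 0" by (simp add: mf_def)

lemma mf_integrable: "mf c integrable_on {0..}"
proof -
  obtain K where K: "\<And>y. y \<ge> 0 \<Longrightarrow> mf c y \<le> K * exp (-y)" using mf_le_exp by blast
  have i: "(\<lambda>y. K * exp (-1*y)) integrable_on {0..}"
    by (intro integrable_on_mult_right integrable_on_exp_minus_to_infinity) simp
  have c: "continuous_on {0..} (mf c)" unfolding mf_def by (intro continuous_intros) simp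
  have b: "\<bar>mf c y\<bar> \<le> K * exp (-1*y)" if "y \<ge> 0" for y
    using K[OF that] mf_pos[OF that] by simp
  show ?thesis
    by (rule cont_bound_integrable[OF c b i])
qed


lemma mf_tendsto0: "(mf c \<longlongrightarrow> 0) at_top"
proof -
  obtain K where K: "\<And>y. y \<ge> 0 \<Longrightarrow> mf c y \<le> K * exp (-y)" using mf_le_exp by blast
  have "((\<lambda>y::real. exp (-y)) \<longlongrightarrow> 0) at_top" by real_asymp
  then have tl: "((\<lambda>y. K * exp (-y)) \<longlongrightarrow> 0) at_top" by (rule tendsto_mult_right_zero)
  have ev: "eventually (\<lambda>y. norm (mf c y) \<le> K * exp (-y)) at_top"
    using eventually_ge_at_top[of "0::real"]
  proof eventually_elim
    case (elim y)
    then show ?case using K[OF elim] mf_pos[OF elim] by simp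
  qed
  show ?thesis by (rule Lim_null_comparison[OF ev tl])
qed

definition q :: "real \<Rightarrow> real \<Rightarrow> real" where "q c y = y^2/2 + c*y"

lemma expq_le_mf: "y \<ge> 0 \<Longrightarrow> exp (- q c y) \<le> mf c y"
proof -
  assume y: "y \<ge> 0"
  have "- q c y \<le> -3*y^2/8 + (1/2 + \<bar>c\<bar>)*y"
  proof -
    have "- c * y \<le> \<bar>c\<bar> * y" using y by (intro mult_right_mono) auto
    moreover have "y^2 \<ge> 0" "y \<ge> 0" using y by auto
    moreover have "(1/2 + \<bar>c\<bar>)*y = y/2 + \<bar>c\<bar>*y" by (simp add: algebra_simps)
    ultimately show ?thesis unfolding q_def by linarith
  qed
  then have "exp (- q c y) \<le> exp (-3*y^2/8 + (1/2 + \<bar>c\<bar>)*y)" by simp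
  also have "\<dots> \<le> mf c y"
  proof -
    have "1 \<le> y^3 + 4*y + 1" using y by simp
    from mult_right_mono[OF this, of "exp (-3*y^2/8 + (1/2 + \<bar>c\<bar>)*y)"]
    show ?thesis by (simp add: mf_def)
  qed
  finally show ?thesis .
qed

lemma b_le: "y \<ge> 0 \<Longrightarrow> exp (- q c y) \<le> exp (-3*y^2/8 + (1/2 + \<bar>c\<bar>)*y)"
proof -
  assume y: "y \<ge> 0"
  have "- c * y \<le> \<bar>c\<bar> * y" using y by (intro mult_right_mono) auto
  moreover have "y^2 \<ge> 0" "y \<ge> 0" using y by auto
  moreover have "(1/2 + \<bar>c\<bar>)*y = y/2 + \<bar>c\<bar>*y" by (simp add: algebra_simps)
  ultimately have "- q c y \<le> -3*y^2/8 + (1/2 + \<bar>c\<bar>)*y" unfolding q_def by linarith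
  then show ?thesis by simp
qed

lemma mf_ge: "y \<ge> 0 \<Longrightarrow> p \<ge> 0 \<Longrightarrow> p \<le> y^3 + 4*y + 1 \<Longrightarrow> p * exp (- q c y) \<le> mf c y"
proof -
  assume y: "y \<ge> 0" and p: "p \<ge> 0" "p \<le> y^3 + 4*y + 1"
  have "p * exp (- q c y) \<le> (y^3 + 4*y + 1) * exp (-3*y^2/8 + (1/2 + \<bar>c\<bar>)*y)"
    using b_le[OF y, of c] p by (intro mult_mono) auto
  then show ?thesis by (simp add: mf_def)
qed

lemma expq_integrable: "(\<lambda>y. exp (- q c y)) integrable_on {0..}"
proof -
  have "\<bar>exp (- q c y)\<bar> \<le> mf c y" if "y \<ge> 0" for y
    using mf_ge[OF that, of 1 c] that by simp
  moreover have "continuous_on {0..} (\<lambda>y. exp (- q c y))" unfolding q_def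
    by (intro continuous_intros) simp
  ultimately show ?thesis by (intro cont_bound_integrable[OF _ _ mf_integrable]) 
qed

lemma gauss_integrable: "(\<lambda>w. exp (- (w^2))) integrable_on {d::real..}"
proof -
  have b: "\<bar>exp (- (w^2))\<bar> \<le> exp (1/4) * exp (-1*w)" for w :: real
  proof -
    have "0 \<le> (w - 1/2)^2" by simp
    then have "- (w^2) \<le> 1/4 + -1*w" by (simp add: power2_eq_square algebra_simps)
    then show ?thesis by (simp add: exp_add[symmetric])
  qed
  have i: "(\<lambda>w. exp (1/4) * exp (-1*w)) integrable_on {d..}"
    by (intro integrable_on_mult_right integrable_on_exp_minus_to_infinity) simp
  have c: "continuous_on {d..} (\<lambda>w::real. exp (- (w^2)))" by (intro continuous_intros)
  show ?thesis by (rule cont_bound_integrable[OF c b i])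
qed

definition M :: "real \<Rightarrow> real" where "M c = integral {0..} (\<lambda>y. exp (- q c y))"

lemma M_mills: "M c = sqrt 2 * mills_ratio (c / sqrt 2)"
proof -
  define d where "d = c / sqrt 2"
  define g where "g = (\<lambda>w::real. exp (- (w^2)))"
  have s2: "sqrt 2 > (0::real)" by simp
  have fin: "integral {0..T} (\<lambda>y. exp (- q c y)) =
      exp (c^2/2) * sqrt 2 * integral {d..(T+c)/sqrt 2} g" if T: "T \<ge> 0" for T
  proof -
    have gi: "(g has_integral integral {d..(T+c)/sqrt 2} g) (cbox d ((T+c)/sqrt 2))"
      unfolding g_def by (auto intro!: integrable_integral integrable_continuous_interval continuous_intros)
    from has_integral_affinity'[OF gi, of "1/sqrt 2" d]
    have "((\<lambda>x. g ((1/sqrt 2) * x + d)) has_integral (integral {d..(T+c)/sqrt 2} g * sqrt 2))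
             (cbox ((d - d) / (1/sqrt 2)) (((T+c)/sqrt 2 - d) / (1/sqrt 2)))"
      by (simp add: mult_ac)
    moreover have "((T+c)/sqrt 2 - d) * sqrt 2 = T"
      by (simp add: d_def field_simps)
    moreover have "g ((1/sqrt 2) * x + d) = exp (- ((x + c)^2 / 2))" for x
      by (simp add: g_def d_def power2_eq_square field_simps)
    ultimately have "((\<lambda>x. exp (- ((x + c)^2 / 2))) has_integral
                       (integral {d..(T+c)/sqrt 2} g * sqrt 2)) {0..T}" by simp
    then have "((\<lambda>x. exp (c^2/2) * exp (- ((x + c)^2 / 2))) has_integral
                 exp (c^2/2) * (integral {d..(T+c)/sqrt 2} g * sqrt 2)) {0..T}"
      by (rule has_integral_mult_right)
    moreover have "exp (c^2/2) * exp (- ((x + c)^2 / 2)) = exp (- q c x)" for x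
      by (simp add: q_def exp_add[symmetric] power2_eq_square field_simps)
    ultimately show ?thesis by (simp add: integral_unique mult_ac)
  qed
  have t1: "((\<lambda>T. integral {0..T} (\<lambda>y. exp (- q c y))) \<longlongrightarrow> M c) at_top"
    unfolding M_def
    by (rule integral_Ici_tendsto[OF expq_integrable _ mf_integrable])
       (use mf_ge[of _ 1 c] in simp)
  have gl: "((\<lambda>S. integral {d..S} g) \<longlongrightarrow> integral {d..} g) at_top"
  proof (rule integral_Ici_tendsto[OF _ _ gauss_integrable[of d]])
    show "g integrable_on {d..}" unfolding g_def by (rule gauss_integrable)
    show "\<bar>g x\<bar> \<le> exp (- (x^2))" for x by (simp add: g_def)
  qed
  have "filterlim (\<lambda>T. (T + c) / sqrt 2) at_top at_top"
    unfolding filterlim_at_top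
  proof
    fix Z :: real
    show "eventually (\<lambda>T. Z \<le> (T + c) / sqrt 2) at_top"
      using eventually_ge_at_top[of "sqrt 2 * Z - c"]
      by eventually_elim (simp add: field_simps)
  qed
  from filterlim_compose[OF gl this]
  have "((\<lambda>T. exp (c^2/2) * sqrt 2 * integral {d..(T+c)/sqrt 2} g) \<longlongrightarrow>
          exp (c^2/2) * sqrt 2 * integral {d..} g) at_top"
    by (intro tendsto_intros) simp
  moreover have "eventually (\<lambda>T. exp (c^2/2) * sqrt 2 * integral {d..(T+c)/sqrt 2} g =
                    integral {0..T} (\<lambda>y. exp (- q c y))) at_top"
    using eventually_ge_at_top[of "0::real"] by eventually_elim (simp add: fin)
  ultimately have "((\<lambda>T. integral {0..T} (\<lambda>y. exp (- q c y))) \<longlongrightarrow>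
          exp (c^2/2) * sqrt 2 * integral {d..} g) at_top"
    by (rule Lim_transform_eventually)
  with t1 have "M c = exp (c^2/2) * sqrt 2 * integral {d..} g"
    by (rule tendsto_unique[rotated]) simp
  moreover have "d^2 = c^2/2" by (simp add: d_def power_divide)
  ultimately show ?thesis
    by (simp add: mills_ratio_def d_def g_def mult_ac)
qed

lemma y2_le: "(y::real) \<ge> 0 \<Longrightarrow> y^2 \<le> y^3 + 1"
proof (cases "y \<le> 1")
  case True
  assume "y \<ge> 0"
  then have "y^2 \<le> 1" using True by (simp add: power_le_one)
  then show ?thesis using \<open>y \<ge> 0\<close> by (smt (verit) zero_le_power)
next
  case False
  then have "y^2 \<le> y^3" by (simp add: power_increasing)
  then show ?thesis by simp
qed

lemma moment:
  "((\<lambda>y. exp (- q c y) * (y - y^3/3)) has_integral ((1 - c^2)/3 + c^3/3 * M c)) {0..}"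
proof -
  define P where "P = (\<lambda>y::real. y^2/3 - c*y/3 + (c^2-1)/3)"
  define F where "F = (\<lambda>y. P y * exp (- q c y))"
  define g where "g = (\<lambda>y. exp (- q c y) * (y - y^3/3 - c^3/3))"
  have deriv: "(F has_real_derivative g y) (at y)" for y
    unfolding F_def P_def g_def q_def
    apply (auto intro!: derivative_eq_intros simp: power2_eq_square power3_eq_cube algebra_simps)
    apply (simp add: field_simps)
    done
  have cont: "continuous_on {0..} g" unfolding g_def q_def by (intro continuous_intros) simp_all
  have bnd: "\<bar>g y\<bar> \<le> (1 + \<bar>c\<bar>^3) * mf c y" if y: "y \<ge> 0" for y
  proof -
    have "\<bar>y - y^3/3 - c^3/3\<bar> \<le> \<bar>y - y^3/3\<bar> + \<bar>c^3/3\<bar>" by (rule abs_triangle_ineq4)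
    also have "\<dots> \<le> (\<bar>y\<bar> + \<bar>y^3/3\<bar>) + \<bar>c^3/3\<bar>" using abs_triangle_ineq4[of y "y^3/3"] by linarith
    also have "\<dots> = y + y^3/3 + \<bar>c\<bar>^3/3" using y by (simp add: power_abs)
    also have "\<dots> \<le> y + y^3 + \<bar>c\<bar>^3"
    proof -
      have "y^3 \<ge> 0" "\<bar>c\<bar>^3 \<ge> 0" using y by simp_all
      then show ?thesis by linarith
    qed
    also have "\<dots> \<le> (1 + \<bar>c\<bar>^3) * (y^3 + 4*y + 1)"
    proof -
      have "\<bar>c\<bar>^3 * y^3 \<ge> 0" "\<bar>c\<bar>^3 * y \<ge> 0" "y^3 \<ge> 0" using y by simp_all
      then show ?thesis using y by (simp add: algebra_simps)
    qed
    finally have p: "\<bar>y - y^3/3 - c^3/3\<bar> \<le> (1 + \<bar>c\<bar>^3) * (y^3 + 4*y + 1)" .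
    have "\<bar>g y\<bar> = \<bar>y - y^3/3 - c^3/3\<bar> * exp (- q c y)" by (simp add: g_def abs_mult)
    also have "\<dots> \<le> ((1 + \<bar>c\<bar>^3) * (y^3 + 4*y + 1)) * exp (- q c y)"
      by (intro mult_right_mono p) simp
    also have "\<dots> = (1 + \<bar>c\<bar>^3) * ((y^3 + 4*y + 1) * exp (- q c y))" by simp
    also have "\<dots> \<le> (1 + \<bar>c\<bar>^3) * mf c y"
      using mf_ge[OF y _ order.refl, of c] y by (intro mult_left_mono) (auto simp: add_nonneg_nonneg)
    finally show ?thesis .
  qed
  have gi: "(\<lambda>y. (1 + \<bar>c\<bar>^3) * mf c y) integrable_on {0..}"
    by (intro integrable_on_mult_right mf_integrable)
  have Flim: "(F \<longlongrightarrow> 0) at_top"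
  proof -
    have tl: "((\<lambda>y. (1 + \<bar>c\<bar> + c^2) * mf c y) \<longlongrightarrow> 0) at_top"
      using tendsto_mult_right_zero[OF mf_tendsto0] by blast
    have ev: "eventually (\<lambda>y. norm (F y) \<le> (1 + \<bar>c\<bar> + c^2) * mf c y) at_top"
      using eventually_ge_at_top[of "0::real"]
    proof eventually_elim
      case (elim y)
      have "\<bar>P y\<bar> \<le> \<bar>y^2/3 - c*y/3\<bar> + \<bar>(c^2-1)/3\<bar>"
        unfolding P_def by (rule abs_triangle_ineq)
      also have "\<dots> \<le> (\<bar>y^2/3\<bar> + \<bar>c*y/3\<bar>) + \<bar>(c^2-1)/3\<bar>"
        using abs_triangle_ineq4[of "y^2/3" "c*y/3"] by linarith
      also have "\<dots> \<le> y^2/3 + \<bar>c\<bar>*y/3 + (c^2+1)/3"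
        using elim by (simp add: abs_mult abs_le_iff)
      also have "\<dots> \<le> (1 + \<bar>c\<bar> + c^2) * (y^3 + 4*y + 1)"
      proof -
        have "\<bar>c\<bar> * y \<ge> 0" "\<bar>c\<bar> * y^3 \<ge> 0" "c^2 * y^3 \<ge> 0" "c^2 * y \<ge> 0" "y^3 \<ge> 0" "\<bar>c\<bar> \<ge> 0" "c^2 \<ge> 0"
          using elim by simp_all
        moreover have eq: "(1 + \<bar>c\<bar> + c^2) * (y^3 + 4*y + 1) = 1 + \<bar>c\<bar> + c^2 + y^3 + 4*y + \<bar>c\<bar>*y^3 + 4*(\<bar>c\<bar>*y) + c^2*y^3 + 4*(c^2*y)"
          by (simp add: algebra_simps)
        moreover have "\<bar>c\<bar> * y / 3 \<le> 4*(\<bar>c\<bar>*y)" "y^2/3 \<le> (y^3 + 1)/3"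
          using \<open>\<bar>c\<bar> * y \<ge> 0\<close> y2_le[OF elim] by (simp_all add: mult.commute)
        ultimately show ?thesis unfolding eq using elim by argo
      qed
      finally have p: "\<bar>P y\<bar> \<le> (1 + \<bar>c\<bar> + c^2) * (y^3 + 4*y + 1)" .
      have "norm (F y) = \<bar>P y\<bar> * exp (- q c y)" by (simp add: F_def abs_mult)
      also have "\<dots> \<le> ((1 + \<bar>c\<bar> + c^2) * (y^3 + 4*y + 1)) * exp (- q c y)"
        by (intro mult_right_mono p) simp
      also have "\<dots> = (1 + \<bar>c\<bar> + c^2) * ((y^3 + 4*y + 1) * exp (- q c y))" by simp
      also have "\<dots> \<le> (1 + \<bar>c\<bar> + c^2) * mf c y"
        using mf_ge[OF elim _ order.refl, of c] elim by (intro mult_left_mono) (auto simp: add_nonneg_nonneg)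
      finally show ?case .
    qed
    show ?thesis by (rule Lim_null_comparison[OF ev tl])
  qed
  have h1: "(g has_integral (0 - F 0)) {0..}"
    by (rule improper_FTC[OF cont deriv bnd gi Flim])
  have e: "0 - F 0 = (1 - c^2)/3" by (simp add: F_def P_def q_def field_simps)
  from h1 have g_int: "(g has_integral ((1 - c^2)/3)) {0..}" unfolding e .
  have "((\<lambda>y. c^3/3 * exp (- q c y)) has_integral (c^3/3 * M c)) {0..}"
    unfolding M_def by (intro has_integral_mult_right integrable_integral expq_integrable)
  from has_integral_add[OF g_int this]
  show ?thesis by (simp add: g_def algebra_simps)
qed

definition E :: "real \<Rightarrow> real \<Rightarrow> real \<Rightarrow> real" where
  "E h c y = (1/h^2 - 1) * ln (1 - h*y) + (1 - c*h) * y / h"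

lemma eh_exp:
  assumes "h > 0" "h*y < 1"
  shows "eh h c y = exp (E h c y)"
  using assms by (simp add: eh_def E_def powr_def exp_add)

lemma eh_end: "h > 0 \<Longrightarrow> eh h c (1/h) = 0"
  by (simp add: eh_def)

lemma eh_nonneg: "eh h c y \<ge> 0"
  by (simp add: eh_def)

lemma E_upper:
  assumes h: "0 < h" "h \<le> 1/2" and y: "0 \<le> y" "h*y < 1"
  shows "E h c y \<le> -3*y^2/8 + (1/2 + \<bar>c\<bar>)*y"
proof -
  define z where "z = h*y"
  have z: "0 \<le> z" "z < 1" using h y by (simp_all add: z_def)
  have k: "1/h^2 - 1 \<ge> 0"
  proof -
    have "h^2 \<le> 1" using h by (simp add: power_le_one)
    then show ?thesis using h by (simp add: field_simps)
  qed
  have "(1/h^2 - 1) * ln (1 - z) \<le> (1/h^2 - 1) * (-z - z^2/2)"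
    by (rule mult_left_mono[OF ln_ineq1[OF z] k])
  also have "\<dots> = -y/h - y^2/2 + h*y + h^2*y^2/2"
    using h by (simp add: z_def field_simps power2_eq_square)
  finally have 1: "(1/h^2 - 1) * ln (1 - z) \<le> -y/h - y^2/2 + h*y + h^2*y^2/2" .
  have 2: "(1 - c*h) * y / h = y/h - c*y" using h by (simp add: field_simps)
  have 3: "h^2*y^2/2 \<le> y^2/8"
  proof -
    have "h^2 \<le> (1/2)^2" using h by (intro power_mono) auto
    then have "h^2 \<le> 1/4" by (simp add: power2_eq_square)
    then show ?thesis using mult_right_mono[of "h^2" "1/4" "y^2"] by simp
  qed
  have 4: "h*y \<le> y/2" using h y mult_right_mono[of h "1/2" y] by simp
  have 5: "- c*y \<le> \<bar>c\<bar>*y" using y by (intro mult_right_mono) auto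
  have 6: "(1/2 + \<bar>c\<bar>)*y = y/2 + \<bar>c\<bar>*y" by (simp add: algebra_simps)
  show ?thesis unfolding E_def z_def[symmetric] using 1 2 3 4 5 6 by linarith
qed

lemma Eq_identity:
  assumes "h > 0"
  shows "E h c y + q c y = (ln (1 - h*y) + h*y + (h*y)^2/2) / h^2 - ln (1 - h*y)"
  using assms by (simp add: E_def q_def field_simps power2_eq_square)

lemma Eq_close:
  assumes h: "0 < h" and y: "0 \<le> y" "h*y \<le> 1/2"
  shows "\<bar>E h c y + q c y\<bar> \<le> h * (y^3 + 2*y)"
proof -
  define z where "z = h*y"
  have z: "0 \<le> z" "z \<le> 1/2" using h y by (simp_all add: z_def)
  have a: "\<bar>(ln (1 - z) + z + z^2/2) / h^2\<bar> \<le> h * y^3"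
  proof -
    have "\<bar>(ln (1 - z) + z + z^2/2) / h^2\<bar> = \<bar>ln (1 - z) + z + z^2/2\<bar> / h^2"
      by (simp add: abs_divide)
    also have "\<dots> \<le> z^3 / h^2" using ln_ineq3[OF z] h by (simp add: divide_right_mono)
    also have "\<dots> = h * y^3" using h by (simp add: z_def power_mult_distrib field_simps eval_nat_numeral)
    finally show ?thesis .
  qed
  have b: "\<bar>ln (1 - z)\<bar> \<le> 2 * z"
  proof -
    have "\<bar>ln (1 - z)\<bar> \<le> \<bar>ln (1 - z) + z\<bar> + z" using z by linarith
    also have "\<dots> \<le> 2*z^2 + z" using ln_ineq2[OF z] by simp
    also have "\<dots> \<le> 2*z" using z mult_right_mono[of z "1/2" z] by (simp add: power2_eq_square)
    finally show ?thesis .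
  qed
  have "\<bar>E h c y + q c y\<bar> \<le> \<bar>(ln (1 - z) + z + z^2/2) / h^2\<bar> + \<bar>ln (1 - z)\<bar>"
    unfolding Eq_identity[OF h] z_def[symmetric] by (rule abs_triangle_ineq4)
  also have "\<dots> \<le> h * y^3 + 2 * z" using a b by simp
  also have "\<dots> = h * (y^3 + 2*y)" by (simp add: z_def algebra_simps)
  finally show ?thesis .
qed

lemma Eq_second:
  assumes h: "0 < h" and y: "0 \<le> y" "h*y \<le> 1/2"
  shows "\<bar>E h c y + q c y - h * (y - y^3/3)\<bar> \<le> h^2 * (y^4 + 2*y^2)"
proof -
  define z where "z = h*y"
  have z: "0 \<le> z" "z \<le> 1/2" using h y by (simp_all add: z_def)
  have id: "E h c y + q c y - h * (y - y^3/3) =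
        (ln (1 - z) + z + z^2/2 + z^3/3) / h^2 - (ln (1 - z) + z)"
    unfolding Eq_identity[OF h] z_def[symmetric] using h
    by (simp add: z_def field_simps power2_eq_square power3_eq_cube)
  have a: "\<bar>(ln (1 - z) + z + z^2/2 + z^3/3) / h^2\<bar> \<le> h^2 * y^4"
  proof -
    have "\<bar>(ln (1 - z) + z + z^2/2 + z^3/3) / h^2\<bar> = \<bar>ln (1 - z) + z + z^2/2 + z^3/3\<bar> / h^2"
      by (simp add: abs_divide)
    also have "\<dots> \<le> z^4 / h^2" using ln_ineq4[OF z] h by (simp add: divide_right_mono)
    also have "\<dots> = h^2 * y^4" using h by (simp add: z_def power_mult_distrib field_simps eval_nat_numeral)
    finally show ?thesis .
  qed
  have b: "\<bar>ln (1 - z) + z\<bar> \<le> 2 * h^2 * y^2"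
    using ln_ineq2[OF z] by (simp add: z_def power_mult_distrib)
  show ?thesis unfolding id using a b abs_triangle_ineq4[of "(ln (1 - z) + z + z^2/2 + z^3/3) / h^2" "ln (1 - z) + z"]
    by (simp add: algebra_simps)
qed

definition Dh :: "real \<Rightarrow> real \<Rightarrow> real \<Rightarrow> real" where
  "Dh h c y = (1/h) * (if y \<le> 1/h then eh h c y else 0) - (1/h) * exp (- q c y)"

definition Lf :: "real \<Rightarrow> real \<Rightarrow> real" where
  "Lf c y = exp (- q c y) * (y - y^3/3)"

lemma D_bound:
  assumes h: "0 < h" "h \<le> 1/2" and y: "0 \<le> y"
  shows "\<bar>Dh h c y\<bar> \<le> mf c y"
proof -
  define eb where "eb = exp (-3*y^2/8 + (1/2 + \<bar>c\<bar>)*y)"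
  have mf: "mf c y = (y^3 + 4*y + 1) * eb" by (simp add: mf_def eb_def)
  have eb0: "eb > 0" by (simp add: eb_def)
  have q: "exp (- q c y) \<le> eb" using b_le[OF y] by (simp add: eb_def)
  have ehb: "eh h c y \<le> eb" if "y \<le> 1/h"
  proof (cases "h*y < 1")
    case True
    have "E h c y \<le> -3*y^2/8 + (1/2 + \<bar>c\<bar>)*y" by (rule E_upper[OF h y True])
    then show ?thesis using eh_exp[OF h(1) True] by (simp add: eb_def)
  next
    case False
    then have "y = 1/h" using that h by (simp add: field_simps)
    then show ?thesis using eh_end[OF h(1)] eb0 by simp
  qed
  have y3: "y^3 \<ge> 0" using y by simp
  consider (A) "h*y \<le> 1/2" | (B) "1/2 < h*y" "y \<le> 1/h" | (C) "y > 1/h" by linarith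
  then show ?thesis
  proof cases
    case A
    have hy1: "h*y < 1" using A by simp
    have yle: "y \<le> 1/h" using A h by (simp add: field_simps)
    have Dh: "Dh h c y = (exp (E h c y) - exp (- q c y)) / h"
      using yle eh_exp[OF h(1) hy1] h by (simp add: Dh_def diff_divide_distrib)
    have "\<bar>exp (E h c y) - exp (- q c y)\<bar> \<le> \<bar>E h c y - - q c y\<bar> * exp (max (E h c y) (- q c y))"
      by (rule exp_diff_bound)
    also have "\<dots> \<le> (h * (y^3 + 2*y)) * eb"
    proof (rule mult_mono)
      show "\<bar>E h c y - - q c y\<bar> \<le> h * (y^3 + 2*y)" using Eq_close[OF h(1) y A] by simp
      have "E h c y \<le> -3*y^2/8 + (1/2 + \<bar>c\<bar>)*y" by (rule E_upper[OF h y hy1])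
      then have "exp (E h c y) \<le> eb" by (simp add: eb_def)
      then show "exp (max (E h c y) (- q c y)) \<le> eb" using q by (simp add: max_def)
    qed (use h y in auto)
    finally have "\<bar>Dh h c y\<bar> \<le> (y^3 + 2*y) * eb"
      unfolding Dh using h by (simp add: abs_divide divide_le_eq mult_ac)
    also have "\<dots> \<le> mf c y" unfolding mf using eb0 y by (intro mult_right_mono) auto
    finally show ?thesis .
  next
    case B
    have hinv: "1/h < 2*y" using B h by (simp add: field_simps)
    have "\<bar>Dh h c y\<bar> = (1/h) * \<bar>eh h c y - exp (- q c y)\<bar>"
      using B h by (simp add: Dh_def abs_mult right_diff_distrib[symmetric] diff_divide_distrib[symmetric] abs_divide)
    also have "\<dots> \<le> (1/h) * (2 * eb)"
    proof (rule mult_left_mono)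
      show "\<bar>eh h c y - exp (- q c y)\<bar> \<le> 2 * eb"
        using ehb[OF B(2)] q eh_nonneg[of h c y] exp_gt_zero[of "- q c y"] by linarith
    qed (use h in simp)
    also have "\<dots> \<le> (2*y) * (2*eb)" using hinv eb0 by (intro mult_right_mono) auto
    also have "\<dots> \<le> mf c y" unfolding mf using eb0 y y3 by (simp add: algebra_simps)
    finally show ?thesis .
  next
    case C
    have hinv: "1/h < y" using C .
    have "\<bar>Dh h c y\<bar> = (1/h) * exp (- q c y)"
      using C h by (simp add: Dh_def abs_mult)
    also have "\<dots> \<le> y * eb" using hinv q h y by (intro mult_mono) auto
    also have "\<dots> \<le> mf c y" unfolding mf using eb0 y y3 by (simp add: algebra_simps)
    finally show ?thesis .
  qed
qed

lemma D_lim: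
  assumes y: "y \<ge> 0"
  shows "((\<lambda>h. Dh h c y) \<longlongrightarrow> Lf c y) (at_right 0)"
proof (cases "y = 0")
  case True
  have "eventually (\<lambda>h. Dh h c y = Lf c y) (at_right 0)"
    using eventually_at_right_less[of "0::real"]
    by eventually_elim (simp add: True Dh_def Lf_def eh_def q_def)
  then show ?thesis by (rule tendsto_eventually)
next
  case False
  then have yp: "y > 0" using y by simp
  define w where "w = (\<lambda>h. E h c y + q c y)"
  define L where "L = y - y^3/3"
  define b where "b = min (1/2) (1/(2*y))"
  have b: "b > 0" using yp by (simp add: b_def)
  have evs: "eventually (\<lambda>h. 0 < h \<and> h*y \<le> 1/2 \<and> h \<le> 1/2) (at_right 0)"
    using eventually_at_right_real[OF b]
  proof eventually_elim
    case (elim h)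
    then have "h < 1/(2*y)" "h < 1/2" "0 < h" by (auto simp: b_def)
    then show ?case using yp by (simp add: field_simps)
  qed
  have th: "((\<lambda>h::real. h) \<longlongrightarrow> 0) (at_right 0)" by simp
  have s1: "((\<lambda>h. w h / h - L) \<longlongrightarrow> 0) (at_right 0)"
  proof -
    have ev: "eventually (\<lambda>h. norm (w h / h - L) \<le> h * (y^4 + 2*y^2)) (at_right 0)"
      using evs
    proof eventually_elim
      case (elim h)
      then have h: "h > 0" by simp
      have "w h / h - L = (w h - h * L) / h" using h by (simp add: field_simps)
      then have "norm (w h / h - L) = \<bar>w h - h*L\<bar> / h" using h by (simp add: abs_divide)
      also have "\<dots> \<le> (h^2 * (y^4 + 2*y^2)) / h"
        using Eq_second[of h y c] elim y h by (intro divide_right_mono) (auto simp: w_def L_def)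
      also have "\<dots> = h * (y^4 + 2*y^2)" using h by (simp add: power2_eq_square)
      finally show ?case .
    qed
    have tl: "((\<lambda>h. h * (y^4 + 2*y^2)) \<longlongrightarrow> 0) (at_right 0)"
      by (rule tendsto_mult_left_zero[OF th])
    show ?thesis by (rule Lim_null_comparison[OF ev tl])
  qed
  have s1': "((\<lambda>h. w h / h) \<longlongrightarrow> L) (at_right 0)"
    using tendsto_add[OF s1 tendsto_const[of L]] by simp
  have s2: "(w \<longlongrightarrow> 0) (at_right 0)"
  proof -
    have ev: "eventually (\<lambda>h. norm (w h) \<le> h * (y^3 + 2*y)) (at_right 0)"
      using evs by eventually_elim (use Eq_close y in \<open>auto simp: w_def\<close>)
    have tl: "((\<lambda>h. h * (y^3 + 2*y)) \<longlongrightarrow> 0) (at_right 0)"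
      by (rule tendsto_mult_left_zero[OF th])
    show ?thesis by (rule Lim_null_comparison[OF ev tl])
  qed
  have s3: "((\<lambda>h. (exp (w h) - 1 - w h) / h) \<longlongrightarrow> 0) (at_right 0)"
  proof -
    have w1: "eventually (\<lambda>h. dist (w h) 0 < 1) (at_right 0)"
      by (rule tendstoD[OF s2]) simp
    have ev: "eventually (\<lambda>h. norm ((exp (w h) - 1 - w h) / h) \<le> \<bar>w h\<bar> * \<bar>w h / h\<bar>) (at_right 0)"
      using evs w1
    proof eventually_elim
      case (elim h)
      then have h: "h > 0" and wl: "\<bar>w h\<bar> \<le> 1" by auto
      have "norm ((exp (w h) - 1 - w h) / h) = \<bar>exp (w h) - 1 - w h\<bar> / h"
        using h by (simp add: abs_divide)
      also have "\<dots> \<le> (w h)^2 / h" using exp_taylor2_bound[OF wl] h by (intro divide_right_mono) auto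
      also have "\<dots> = \<bar>w h\<bar> * \<bar>w h / h\<bar>" using h
        by (simp add: power2_eq_square abs_divide abs_mult[symmetric])
      finally show ?case .
    qed
    have tl: "((\<lambda>h. \<bar>w h\<bar> * \<bar>w h / h\<bar>) \<longlongrightarrow> 0) (at_right 0)"
      using tendsto_mult[OF tendsto_rabs[OF s2] tendsto_rabs[OF s1']] by simp
    show ?thesis by (rule Lim_null_comparison[OF ev tl])
  qed
  have s4: "((\<lambda>h. (exp (w h) - 1) / h) \<longlongrightarrow> L) (at_right 0)"
  proof -
    have "((\<lambda>h. (exp (w h) - 1 - w h) / h + w h / h) \<longlongrightarrow> 0 + L) (at_right 0)"
      by (rule tendsto_add[OF s3 s1'])
    moreover have "(exp (w h) - 1 - w h) / h + w h / h = (exp (w h) - 1) / h" for h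
      by (simp add: diff_divide_distrib)
    ultimately show ?thesis by simp
  qed
  have "((\<lambda>h. exp (- q c y) * ((exp (w h) - 1) / h)) \<longlongrightarrow> exp (- q c y) * L) (at_right 0)"
    by (rule tendsto_mult[OF tendsto_const s4])
  moreover have "eventually (\<lambda>h. exp (- q c y) * ((exp (w h) - 1) / h) = Dh h c y) (at_right 0)"
    using evs
  proof eventually_elim
    case (elim h)
    then have h: "h > 0" and hy: "h*y < 1" "y \<le> 1/h" by (auto simp: field_simps)
    have "eh h c y = exp (w h) * exp (- q c y)"
      using eh_exp[OF h hy(1)] by (simp add: w_def exp_add[symmetric])
    then show ?case using hy h by (simp add: Dh_def field_simps)
  qed
  ultimately have "((\<lambda>h. Dh h c y) \<longlongrightarrow> exp (- q c y) * L) (at_right 0)"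
    by (rule Lim_transform_eventually)
  then show ?thesis by (simp add: Lf_def L_def)
qed

lemma D_integral:
  assumes h: "0 < h" and ch: "c * h \<le> 1"
  shows "Dh h c integrable_on {0..}"
    "integral {0..} (Dh h c) = (1/h) * integral {0..1/h} (eh h c) - (1/h) * M c"
proof -
  have ehi: "eh h c integrable_on {0..1/h}"
    using subst_eh[OF h, of c] ch by (auto intro: has_integral_integrable)
  have e: "{..1/h} \<inter> {0..} = {0..1/h}" by auto
  have ri: "(\<lambda>y. if y \<in> {..1/h} then eh h c y else 0) integrable_on {0..}"
    unfolding integrable_restrict_Int e by (rule ehi)
  have ri2: "integral {0..} (\<lambda>y. if y \<in> {..1/h} then eh h c y else 0) = integral {0..1/h} (eh h c)"
    unfolding integral_restrict_Int e ..
  have eq: "Dh h c = (\<lambda>y. (1/h) * (if y \<in> {..1/h} then eh h c y else 0) - (1/h) * exp (- q c y))"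
    by (auto simp: Dh_def intro!: ext)
  have i1: "(\<lambda>y. (1/h) * (if y \<in> {..1/h} then eh h c y else 0)) integrable_on {0..}"
    by (rule integrable_on_mult_right[OF ri])
  have i2: "(\<lambda>y. (1/h) * exp (- q c y)) integrable_on {0..}"
    by (rule integrable_on_mult_right[OF expq_integrable])
  show "Dh h c integrable_on {0..}" unfolding eq by (rule integrable_diff[OF i1 i2])
  show "integral {0..} (Dh h c) = (1/h) * integral {0..1/h} (eh h c) - (1/h) * M c"
    unfolding eq integral_diff[OF i1 i2] integral_mult_right ri2 M_def ..
qed

lemma DCT_lim:
  assumes H: "\<And>n. 0 < H n \<and> H n \<le> 1/2 \<and> c * H n \<le> 1" and H0: "H \<longlonglongrightarrow> 0"
  shows "(\<lambda>n. integral {0..} (Dh (H n) c)) \<longlonglongrightarrow> (1 - c^2)/3 + c^3/3 * M c"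
proof -
  have fH: "filterlim H (at_right 0) sequentially"
    by (rule tendsto_imp_filterlim_at_right[OF H0]) (use H in auto)
  have "(\<lambda>n. integral {0..} (Dh (H n) c)) \<longlonglongrightarrow> integral {0..} (Lf c)"
  proof (rule dominated_convergence(2)[where h = "mf c"])
    show "Dh (H n) c integrable_on {0..}" for n using D_integral(1)[of "H n" c] H[of n] by auto
    show "mf c integrable_on {0..}" by (rule mf_integrable)
    show "norm (Dh (H n) c y) \<le> mf c y" if "y \<in> {0..}" for n y
      using D_bound[of "H n" y c] H[of n] that by auto
    show "(\<lambda>n. Dh (H n) c y) \<longlonglongrightarrow> Lf c y" if "y \<in> {0..}" for y
      using filterlim_compose[OF D_lim[of y c] fH] that by auto
  qed
  moreover have "integral {0..} (Lf c) = (1 - c^2)/3 + c^3/3 * M c"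
    using moment[of c] unfolding Lf_def[abs_def] by (rule integral_unique)
  ultimately show ?thesis by simp
qed

lemma key_eq:
  fixes \<theta> \<gamma> s :: real
  assumes th: "\<theta> > 0" and s: "s > 0" "s \<ge> 4*\<theta>" "s \<ge> \<gamma>^2"
  defines "c \<equiv> \<gamma> / sqrt \<theta>" and "h \<equiv> sqrt (\<theta> / s)"
  shows "F_s \<theta> s (1 - \<gamma> / sqrt s)
            - (sqrt (2 / \<theta>) * mills_ratio (\<gamma> / sqrt (2 * \<theta>)) * sqrt s
               + \<gamma> ^ 3 * sqrt 2 / (3 * \<theta> powr (3/2)) * mills_ratio (\<gamma> / sqrt (2 * \<theta>))
               - \<gamma>\<^sup>2 / (3 * \<theta>) - 2 / 3)
       = integral {0..} (Dh h c) - ((1 - c^2)/3 + c^3/3 * M c)"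
proof -
  define a where "a = s / \<theta>"
  define \<rho> where "\<rho> = 1 - \<gamma> / sqrt s"
  have sq: "sqrt s > 0" "sqrt \<theta> > 0" using s th by auto
  have h: "h > 0" using th s by (simp add: h_def)
  have gs: "\<gamma> \<le> sqrt s"
  proof -
    have "\<bar>\<gamma>\<bar> = sqrt (\<gamma>^2)" by simp
    also have "\<dots> \<le> sqrt s" using s by (intro real_sqrt_le_mono) auto
    finally show ?thesis by simp
  qed
  have rho: "\<rho> \<ge> 0" using gs sq by (simp add: \<rho>_def field_simps)
  have ch: "c * h = \<gamma> / sqrt s" using th s
    by (simp add: c_def h_def real_sqrt_divide field_simps)
  have ha: "1/h^2 = a" using th s by (simp add: h_def a_def)
  have c1: "c * h \<le> 1" unfolding ch using gs sq(1) by (simp add: pos_divide_le_eq)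
  define I where "I = integral {0..1} (\<lambda>u. u powr (a-1) * exp ((a*\<rho>)*(1-u)))"
  have F: "F_s \<theta> s \<rho> = a * I - 1"
    using F_s_repr[OF th s(1) rho] by (simp add: a_def I_def)
  have sub: "integral {0..1/h} (eh h c) = I / h"
    using subst_eh[OF h, of c] c1 unfolding ha I_def by (simp add: ch \<rho>_def integral_unique)
  have DI: "integral {0..} (Dh h c) = a * I - M c / h"
  proof -
    have "integral {0..} (Dh h c) = (1/h) * (I/h) - (1/h) * M c"
      using D_integral(2)[OF h c1] sub by simp
    also have "(1/h) * (I/h) = (1/h^2) * I" by (simp add: power2_eq_square)
    finally show ?thesis unfolding ha by simp
  qed
  have FD: "F_s \<theta> s \<rho> = integral {0..} (Dh h c) + M c / h - 1" using F DI by simp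
  have Mm: "M c = sqrt 2 * mills_ratio (\<gamma> / sqrt (2 * \<theta>))"
    using M_mills[of c] by (simp add: c_def real_sqrt_mult mult_ac)
  define X where "X = mills_ratio (\<gamma> / sqrt (2 * \<theta>))"
  have t1: "M c / h = sqrt (2 / \<theta>) * X * sqrt s"
    using th s sq by (simp add: Mm X_def h_def real_sqrt_divide field_simps)
  have tp: "\<theta> powr (3/2) = sqrt \<theta> ^ 3"
  proof -
    have "\<theta> powr (3/2) = \<theta> powr (1 + 1/2)" by simp
    also have "\<dots> = \<theta> * sqrt \<theta>" unfolding powr_add using th by (simp add: powr_half_sqrt)
    also have "\<dots> = sqrt \<theta> ^ 3" using th by (simp add: power3_eq_cube)
    finally show ?thesis .
  qed
  have t2: "c^3/3 * M c = \<gamma> ^ 3 * sqrt 2 / (3 * \<theta> powr (3/2)) * X"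
  proof -
    have c3: "c^3 = \<gamma>^3 / sqrt \<theta> ^ 3" by (simp add: c_def power_divide)
    show ?thesis unfolding Mm X_def[symmetric] c3 tp using sq by (simp add: field_simps)
  qed
  have t3: "c^2 = \<gamma>^2 / \<theta>" using th by (simp add: c_def power_divide)
  show ?thesis
    unfolding \<rho>_def[symmetric] X_def[symmetric] FD t1[symmetric] t2[symmetric]
    using th by (simp add: t3 field_simps)
qed

theorem proposition5p3:
  fixes \<theta> \<gamma> :: real
  assumes "\<theta> > 0"
  shows "((\<lambda>s. F_s \<theta> s (1 - \<gamma> / sqrt s)
            - (sqrt (2 / \<theta>) * mills_ratio (\<gamma> / sqrt (2 * \<theta>)) * sqrt s
               + \<gamma> ^ 3 * sqrt 2 / (3 * \<theta> powr (3/2)) * mills_ratio (\<gamma> / sqrt (2 * \<theta>))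
               - \<gamma>\<^sup>2 / (3 * \<theta>) - 2 / 3))
          \<longlongrightarrow> 0) at_top"
proof (rule tendsto_at_topI_sequentially)
  fix X :: "nat \<Rightarrow> real" assume X: "filterlim X at_top sequentially"
  define c where "c = \<gamma> / sqrt \<theta>"
  define s0 where "s0 = max 1 (max (4*\<theta>) (\<gamma>^2))"
  define H where "H = (\<lambda>n. sqrt (\<theta> / max (X n) s0))"
  define C where "C = (1 - c^2)/3 + c^3/3 * M c"
  have s0: "s0 > 0" "s0 \<ge> 4*\<theta>" "s0 \<ge> \<gamma>^2" by (auto simp: s0_def)
  have Hp: "0 < H n \<and> H n \<le> 1/2 \<and> c * H n \<le> 1" for n
  proof -
    define s where "s = max (X n) s0"
    have s: "s > 0" "s \<ge> 4*\<theta>" "s \<ge> \<gamma>^2" using s0 by (auto simp: s_def)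
    have Hs: "H n = sqrt (\<theta> / s)" by (simp add: H_def s_def)
    have "H n > 0" using s assms by (simp add: Hs)
    moreover have "H n \<le> 1/2"
    proof -
      have "\<theta> / s \<le> 1/4" using s assms by (simp add: field_simps)
      then have "sqrt (\<theta> / s) \<le> sqrt (1/4)" by (rule real_sqrt_le_mono)
      also have "sqrt (1/4) = (1/2::real)" by (simp add: real_sqrt_divide)
      finally show ?thesis by (simp add: Hs)
    qed
    moreover have "c * H n \<le> 1"
    proof -
      have gs: "\<gamma> \<le> sqrt s"
      proof -
        have "\<bar>\<gamma>\<bar> = sqrt (\<gamma>^2)" by simp
        also have "\<dots> \<le> sqrt s" using s by (intro real_sqrt_le_mono) auto
        finally show ?thesis by simp
      qed
      have e: "c * H n = \<gamma> / sqrt s" using assms s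
        by (simp add: Hs c_def real_sqrt_divide field_simps)
      have "sqrt s > 0" using s by simp
      then show ?thesis unfolding e using gs by (simp add: pos_divide_le_eq)
    qed
    ultimately show ?thesis by simp
  qed
  have H0: "H \<longlonglongrightarrow> 0"
  proof -
    have "filterlim (\<lambda>n. max (X n) s0) at_top sequentially"
      by (rule filterlim_at_top_mono[OF X]) simp
    then have "(\<lambda>n. \<theta> / max (X n) s0) \<longlonglongrightarrow> 0"
      by (intro tendsto_divide_0[OF tendsto_const] filterlim_at_top_imp_at_infinity)
    then have "(\<lambda>n. sqrt (\<theta> / max (X n) s0)) \<longlonglongrightarrow> sqrt 0" by (rule tendsto_real_sqrt)
    then show ?thesis by (simp add: H_def)
  qed
  have lim: "(\<lambda>n. integral {0..} (Dh (H n) c) - C) \<longlonglongrightarrow> 0"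
    using tendsto_diff[OF DCT_lim[OF Hp H0] tendsto_const[of C]] by (simp add: C_def)
  have ev: "eventually (\<lambda>n. integral {0..} (Dh (H n) c) - C =
      F_s \<theta> (X n) (1 - \<gamma> / sqrt (X n))
            - (sqrt (2 / \<theta>) * mills_ratio (\<gamma> / sqrt (2 * \<theta>)) * sqrt (X n)
               + \<gamma> ^ 3 * sqrt 2 / (3 * \<theta> powr (3/2)) * mills_ratio (\<gamma> / sqrt (2 * \<theta>))
               - \<gamma>\<^sup>2 / (3 * \<theta>) - 2 / 3)) sequentially"
    using filterlim_at_top[THEN iffD1, OF X, rule_format, of s0]
  proof eventually_elim
    case (elim n)
    then have m: "max (X n) s0 = X n" by simp
    have xs: "X n > 0" "X n \<ge> 4*\<theta>" "X n \<ge> \<gamma>^2" using elim s0 by auto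
    show ?case using key_eq[OF assms xs] by (simp add: H_def m C_def c_def)
  qed
  show "(\<lambda>n. F_s \<theta> (X n) (1 - \<gamma> / sqrt (X n))
            - (sqrt (2 / \<theta>) * mills_ratio (\<gamma> / sqrt (2 * \<theta>)) * sqrt (X n)
               + \<gamma> ^ 3 * sqrt 2 / (3 * \<theta> powr (3/2)) * mills_ratio (\<gamma> / sqrt (2 * \<theta>))
               - \<gamma>\<^sup>2 / (3 * \<theta>) - 2 / 3)) \<longlonglongrightarrow> 0"
    by (rule Lim_transform_eventually[OF lim ev])
qed

end
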